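(* Let $M$ be a smooth manifold, $\nabla$ an affine connection on $M$, and $(\hat J_1,\hat J_2,\hat J_3)$ a generalized almost para-quaternionic structure on $M$. If $\hat J_1$ and $\hat J_2$ are $\nabla$-integrable, then $\hat J_3$ is $\nabla$-integrable. Moreover, if $\hat J_2$ and $\hat J_3$ are $\nabla$-integrable, then $\hat J_1$ is $\nabla$-integrable.
   Context: A generalized almost para-quaternionic structure: endomorphisms $\hat J_1,\hat J_2,\hat J_3$ of $TM\oplus T^*M$ with $\hat J_1^2=-I$, $\hat J_2^2=\hat J_3^2=I$, $\hat J_1\hat J_2=-\hat J_2\hat J_1$, $\hat J_3=\hat J_1\hat J_2$. The $\nabla$-bracket: $[X+\eta,Y+\beta]_\nabla:=[X,Y]+\nabla_X\beta-\nabla_Y\eta$. $N^\nabla_{\hat K}(\sigma,\tau):=[\hat K\sigma,\hat K\tau]_\nabla-\hat K[\hat K\sigma,\tau]_\nabla-\hat K[\sigma,\hat K\tau]_\nabla+\hat K^2[\sigma,\tau]_\nabla$; $\hat K$ is $\nabla$-integrable if $N^\nabla_{\hat K}=0$. *)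

theory Defs
  imports "HOL-Analysis.Analysis"
begin

fun Ck :: "nat \<Rightarrow> 'a::euclidean_space set \<Rightarrow> ('a \<Rightarrow> 'b::real_normed_vector) \<Rightarrow> bool" where
  "Ck 0 U f = continuous_on U f"
| "Ck (Suc k) U f =
     ((\<forall>x\<in>U. f differentiable (at x)) \<and>
      (\<forall>v. Ck k U (\<lambda>x. frechet_derivative f (at x) v)))"

definition smooth_on :: "'a::euclidean_space set \<Rightarrow> ('a \<Rightarrow> 'b::real_normed_vector) \<Rightarrow> bool" where
  "smooth_on U f \<longleftrightarrow> (\<forall>k. Ck k U f)"

definition smooth_manifold :: "'m topology \<Rightarrow> (('m \<Rightarrow> 'e::euclidean_space) \<times> 'm set) set \<Rightarrow> bool" where
  "smooth_manifold T A \<longleftrightarrow>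
     Hausdorff_space T \<and> second_countable T \<and>
     \<Union>(snd ` A) = topspace T \<and>
     (\<forall>(\<phi>, U)\<in>A. openin T U \<and> open (\<phi> ` U) \<and>
        homeomorphic_map (subtopology T U) (top_of_set (\<phi> ` U)) \<phi>) \<and>
     (\<forall>(\<phi>, U)\<in>A. \<forall>(\<psi>, V)\<in>A. smooth_on (\<phi> ` (U \<inter> V)) (\<psi> \<circ> inv_into U \<phi>))"

definition smooth_functions :: "'m topology \<Rightarrow> (('m \<Rightarrow> 'e::euclidean_space) \<times> 'm set) set \<Rightarrow> ('m \<Rightarrow> real) set" where
  "smooth_functions T A =
     {f. (\<forall>(\<phi>, U)\<in>A. smooth_on (\<phi> ` U) (f \<circ> inv_into U \<phi>)) \<and> (\<forall>x. x \<notin> topspace T \<longrightarrow> f x = 0)}"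

type_synonym 'm fn = "'m \<Rightarrow> real"
type_synonym 'm vfield = "'m fn \<Rightarrow> 'm fn"
type_synonym 'm oneform = "'m vfield \<Rightarrow> 'm fn"
type_synonym 'm gsec = "'m vfield \<times> 'm oneform"

section \<open>Vector fields (derivations of C^\<infinity>(M)) and 1-forms (C^\<infinity>(M)-linear maps on vector fields)\<close>

definition vector_field :: "'m fn set \<Rightarrow> 'm vfield \<Rightarrow> bool" where
  "vector_field S X \<longleftrightarrow>
     (\<forall>f\<in>S. X f \<in> S) \<and> (\<forall>f. f \<notin> S \<longrightarrow> X f = (\<lambda>_. 0)) \<and>
     (\<forall>f\<in>S. \<forall>g\<in>S. \<forall>a b::real. X (\<lambda>x. a * f x + b * g x) = (\<lambda>x. a * X f x + b * X g x)) \<and>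
     (\<forall>f\<in>S. \<forall>g\<in>S. X (\<lambda>x. f x * g x) = (\<lambda>x. f x * X g x + g x * X f x))"

definition vf_add :: "'m vfield \<Rightarrow> 'm vfield \<Rightarrow> 'm vfield" where
  "vf_add X Y = (\<lambda>g x. X g x + Y g x)"

definition vf_smul :: "'m fn \<Rightarrow> 'm vfield \<Rightarrow> 'm vfield" where
  "vf_smul f X = (\<lambda>g x. f x * X g x)"

definition lie :: "'m fn set \<Rightarrow> 'm vfield \<Rightarrow> 'm vfield \<Rightarrow> 'm vfield" where
  "lie S X Y = (\<lambda>g. if g \<in> S then (\<lambda>x. X (Y g) x - Y (X g) x) else (\<lambda>_. 0))"

definition one_form :: "'m fn set \<Rightarrow> 'm oneform \<Rightarrow> bool" where
  "one_form S \<eta> \<longleftrightarrow>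
     (\<forall>X. vector_field S X \<longrightarrow> \<eta> X \<in> S) \<and>
     (\<forall>X. \<not> vector_field S X \<longrightarrow> \<eta> X = (\<lambda>_. 0)) \<and>
     (\<forall>f\<in>S. \<forall>X Y. vector_field S X \<longrightarrow> vector_field S Y \<longrightarrow>
        \<eta> (vf_add (vf_smul f X) Y) = (\<lambda>x. f x * \<eta> X x + \<eta> Y x))"

definition affine_connection :: "'m fn set \<Rightarrow> ('m vfield \<Rightarrow> 'm vfield \<Rightarrow> 'm vfield) \<Rightarrow> bool" where
  "affine_connection S nabla \<longleftrightarrow>
     (\<forall>X Y. vector_field S X \<longrightarrow> vector_field S Y \<longrightarrow> vector_field S (nabla X Y)) \<and>
     (\<forall>f\<in>S. \<forall>X Y Z. vector_field S X \<longrightarrow> vector_field S Y \<longrightarrow> vector_field S Z \<longrightarrow>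
        nabla (vf_add (vf_smul f X) Y) Z = vf_add (vf_smul f (nabla X Z)) (nabla Y Z)) \<and>
     (\<forall>X Y Z. vector_field S X \<longrightarrow> vector_field S Y \<longrightarrow> vector_field S Z \<longrightarrow>
        nabla X (vf_add Y Z) = vf_add (nabla X Y) (nabla X Z)) \<and>
     (\<forall>f\<in>S. \<forall>X Y. vector_field S X \<longrightarrow> vector_field S Y \<longrightarrow>
        nabla X (vf_smul f Y) = vf_add (vf_smul (X f) Y) (vf_smul f (nabla X Y)))"

definition nabla_form :: "'m fn set \<Rightarrow> ('m vfield \<Rightarrow> 'm vfield \<Rightarrow> 'm vfield) \<Rightarrow> 'm vfield \<Rightarrow> 'm oneform \<Rightarrow> 'm oneform" where
  "nabla_form S nabla X \<beta> =
     (\<lambda>Y. if vector_field S Y then (\<lambda>x. X (\<beta> Y) x - \<beta> (nabla X Y) x) else (\<lambda>_. 0))"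

definition gsections :: "'m fn set \<Rightarrow> 'm gsec set" where
  "gsections S = {(X, \<eta>). vector_field S X \<and> one_form S \<eta>}"

definition sec_add :: "'m gsec \<Rightarrow> 'm gsec \<Rightarrow> 'm gsec" where
  "sec_add \<sigma> \<tau> = (\<lambda>g x. fst \<sigma> g x + fst \<tau> g x, \<lambda>Y x. snd \<sigma> Y x + snd \<tau> Y x)"

definition sec_diff :: "'m gsec \<Rightarrow> 'm gsec \<Rightarrow> 'm gsec" where
  "sec_diff \<sigma> \<tau> = (\<lambda>g x. fst \<sigma> g x - fst \<tau> g x, \<lambda>Y x. snd \<sigma> Y x - snd \<tau> Y x)"

definition sec_neg :: "'m gsec \<Rightarrow> 'm gsec" where
  "sec_neg \<sigma> = (\<lambda>g x. - fst \<sigma> g x, \<lambda>Y x. - snd \<sigma> Y x)"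

definition sec_smul :: "'m fn \<Rightarrow> 'm gsec \<Rightarrow> 'm gsec" where
  "sec_smul f \<sigma> = (\<lambda>g x. f x * fst \<sigma> g x, \<lambda>Y x. f x * snd \<sigma> Y x)"

definition sec_zero :: "'m gsec" where
  "sec_zero = (\<lambda>g x. 0, \<lambda>Y x. 0)"

text \<open>Endomorphisms of the bundle TM \<oplus> T*M = C^\<infinity>(M)-linear maps of its sections.\<close>
definition bundle_endo :: "'m fn set \<Rightarrow> ('m gsec \<Rightarrow> 'm gsec) \<Rightarrow> bool" where
  "bundle_endo S K \<longleftrightarrow>
     (\<forall>\<sigma>\<in>gsections S. K \<sigma> \<in> gsections S) \<and>
     (\<forall>f\<in>S. \<forall>\<sigma>\<in>gsections S. \<forall>\<tau>\<in>gsections S.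
        K (sec_add (sec_smul f \<sigma>) \<tau>) = sec_add (sec_smul f (K \<sigma>)) (K \<tau>))"

definition gen_almost_paraquaternionic ::
  "'m fn set \<Rightarrow> ('m gsec \<Rightarrow> 'm gsec) \<Rightarrow> ('m gsec \<Rightarrow> 'm gsec) \<Rightarrow> ('m gsec \<Rightarrow> 'm gsec) \<Rightarrow> bool" where
  "gen_almost_paraquaternionic S J1 J2 J3 \<longleftrightarrow>
     bundle_endo S J1 \<and> bundle_endo S J2 \<and> bundle_endo S J3 \<and>
     (\<forall>\<sigma>\<in>gsections S.
        J1 (J1 \<sigma>) = sec_neg \<sigma> \<and> J2 (J2 \<sigma>) = \<sigma> \<and> J3 (J3 \<sigma>) = \<sigma> \<and>
        J1 (J2 \<sigma>) = sec_neg (J2 (J1 \<sigma>)) \<and> J3 \<sigma> = J1 (J2 \<sigma>))"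

definition nabla_bracket :: "'m fn set \<Rightarrow> ('m vfield \<Rightarrow> 'm vfield \<Rightarrow> 'm vfield) \<Rightarrow> 'm gsec \<Rightarrow> 'm gsec \<Rightarrow> 'm gsec" where
  "nabla_bracket S nabla \<sigma> \<tau> =
     (lie S (fst \<sigma>) (fst \<tau>),
      \<lambda>Z x. nabla_form S nabla (fst \<sigma>) (snd \<tau>) Z x - nabla_form S nabla (fst \<tau>) (snd \<sigma>) Z x)"

definition nabla_nijenhuis :: "'m fn set \<Rightarrow> ('m vfield \<Rightarrow> 'm vfield \<Rightarrow> 'm vfield) \<Rightarrow> ('m gsec \<Rightarrow> 'm gsec) \<Rightarrow> 'm gsec \<Rightarrow> 'm gsec \<Rightarrow> 'm gsec" where
  "nabla_nijenhuis S nabla K \<sigma> \<tau> =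
     sec_add
       (sec_diff (sec_diff (nabla_bracket S nabla (K \<sigma>) (K \<tau>))
                           (K (nabla_bracket S nabla (K \<sigma>) \<tau>)))
                 (K (nabla_bracket S nabla \<sigma> (K \<tau>))))
       (K (K (nabla_bracket S nabla \<sigma> \<tau>)))"

definition nabla_integrable :: "'m fn set \<Rightarrow> ('m vfield \<Rightarrow> 'm vfield \<Rightarrow> 'm vfield) \<Rightarrow> ('m gsec \<Rightarrow> 'm gsec) \<Rightarrow> bool" where
  "nabla_integrable S nabla K \<longleftrightarrow>
     (\<forall>\<sigma>\<in>gsections S. \<forall>\<tau>\<in>gsections S. nabla_nijenhuis S nabla K \<sigma> \<tau> = sec_zero)"

end

theory Submission
  imports Defs "HOL-Library.Function_Algebras"
begin

lemma alg_case1: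
  fixes G :: "'a::ab_group_add set" and b :: "'a \<Rightarrow> 'a \<Rightarrow> 'a" and P Q R :: "'a \<Rightarrow> 'a"
  assumes G0: "0 \<in> G" and Gd: "\<And>u v. u \<in> G \<Longrightarrow> v \<in> G \<Longrightarrow> u - v \<in> G"
    and bG: "\<And>u v. u \<in> G \<Longrightarrow> v \<in> G \<Longrightarrow> b u v \<in> G"
    and bl: "\<And>u v w. u \<in> G \<Longrightarrow> v \<in> G \<Longrightarrow> w \<in> G \<Longrightarrow> b (u - v) w = b u w - b v w"
    and br: "\<And>u v w. u \<in> G \<Longrightarrow> v \<in> G \<Longrightarrow> w \<in> G \<Longrightarrow> b w (u - v) = b w u - b w v"
    and PG: "\<And>u. u \<in> G \<Longrightarrow> P u \<in> G" and QG: "\<And>u. u \<in> G \<Longrightarrow> Q u \<in> G" and RG: "\<And>u. u \<in> G \<Longrightarrow> R u \<in> G"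
    and Pl: "\<And>u v. u \<in> G \<Longrightarrow> v \<in> G \<Longrightarrow> P (u - v) = P u - P v"
    and Ql: "\<And>u v. u \<in> G \<Longrightarrow> v \<in> G \<Longrightarrow> Q (u - v) = Q u - Q v"
    and Rl: "\<And>u v. u \<in> G \<Longrightarrow> v \<in> G \<Longrightarrow> R (u - v) = R u - R v"
    and PP: "\<And>u. u \<in> G \<Longrightarrow> P (P u) = - u" and QQ: "\<And>u. u \<in> G \<Longrightarrow> Q (Q u) = u"
    and RR: "\<And>u. u \<in> G \<Longrightarrow> R (R u) = u"
    and PQ: "\<And>u. u \<in> G \<Longrightarrow> P (Q u) = R u" and QP: "\<And>u. u \<in> G \<Longrightarrow> Q (P u) = - R u"
    and PR: "\<And>u. u \<in> G \<Longrightarrow> P (R u) = - Q u" and RP: "\<And>u. u \<in> G \<Longrightarrow> R (P u) = Q u"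
    and QR: "\<And>u. u \<in> G \<Longrightarrow> Q (R u) = - P u" and RQ: "\<And>u. u \<in> G \<Longrightarrow> R (Q u) = P u"
    and two: "\<And>u::'a. u + u = 0 \<Longrightarrow> u = 0"
    and NP: "\<And>u v. u \<in> G \<Longrightarrow> v \<in> G \<Longrightarrow> b (P u) (P v) - P (b (P u) v) - P (b u (P v)) + P (P (b u v)) = 0"
    and NQ: "\<And>u v. u \<in> G \<Longrightarrow> v \<in> G \<Longrightarrow> b (Q u) (Q v) - Q (b (Q u) v) - Q (b u (Q v)) + Q (Q (b u v)) = 0"
    and x: "x \<in> G" and y: "y \<in> G"
  shows "b (R x) (R y) - R (b (R x) y) - R (b x (R y)) + R (R (b x y)) = 0"
proof -
  have Gn: "\<And>u. u \<in> G \<Longrightarrow> - u \<in> G" using Gd[OF G0] by simp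
  have Ga: "\<And>u v. u \<in> G \<Longrightarrow> v \<in> G \<Longrightarrow> u + v \<in> G" using Gd Gn by (metis diff_minus_eq_add)
  have b0l: "\<And>w. w \<in> G \<Longrightarrow> b 0 w = 0" using bl[OF G0 G0] by simp
  have b0r: "\<And>w. w \<in> G \<Longrightarrow> b w 0 = 0" using br[OF G0 G0] by simp
  have bnl: "\<And>u w. u \<in> G \<Longrightarrow> w \<in> G \<Longrightarrow> b (- u) w = - b u w" using bl[OF G0] b0l by (metis diff_0)
  have bnr: "\<And>u w. u \<in> G \<Longrightarrow> w \<in> G \<Longrightarrow> b w (- u) = - b w u" using br[OF G0] b0r by (metis diff_0)
  have bal: "\<And>u v w. u \<in> G \<Longrightarrow> v \<in> G \<Longrightarrow> w \<in> G \<Longrightarrow> b (u + v) w = b u w + b v w"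
    using bl bnl Gn by (metis diff_minus_eq_add)
  have bar: "\<And>u v w. u \<in> G \<Longrightarrow> v \<in> G \<Longrightarrow> w \<in> G \<Longrightarrow> b w (u + v) = b w u + b w v"
    using br bnr Gn by (metis diff_minus_eq_add)
  have P0: "P 0 = 0" using Pl[OF G0 G0] by simp
  have Q0: "Q 0 = 0" using Ql[OF G0 G0] by simp
  have R0: "R 0 = 0" using Rl[OF G0 G0] by simp
  have Pn: "\<And>u. u \<in> G \<Longrightarrow> P (- u) = - P u" using Pl[OF G0] P0 by (metis diff_0)
  have Qn: "\<And>u. u \<in> G \<Longrightarrow> Q (- u) = - Q u" using Ql[OF G0] Q0 by (metis diff_0)
  have Rn: "\<And>u. u \<in> G \<Longrightarrow> R (- u) = - R u" using Rl[OF G0] R0 by (metis diff_0)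
  have Pa: "\<And>u v. u \<in> G \<Longrightarrow> v \<in> G \<Longrightarrow> P (u + v) = P u + P v" using Pl Pn Gn by (metis diff_minus_eq_add)
  have Qa: "\<And>u v. u \<in> G \<Longrightarrow> v \<in> G \<Longrightarrow> Q (u + v) = Q u + Q v" using Ql Qn Gn by (metis diff_minus_eq_add)
  have Ra: "\<And>u v. u \<in> G \<Longrightarrow> v \<in> G \<Longrightarrow> R (u + v) = R u + R v" using Rl Rn Gn by (metis diff_minus_eq_add)
  note rules = Gn Ga Gd bG PG QG RG bl br bnl bnr bal bar Pl Ql Rl Pn Qn Rn Pa Qa Ra PP QQ RR PQ QP PR RP QR RQ x y
  let ?NP = "\<lambda>u v. b (P u) (P v) - P (b (P u) v) - P (b u (P v)) + P (P (b u v))"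
  let ?NQ = "\<lambda>u v. b (Q u) (Q v) - Q (b (Q u) v) - Q (b u (Q v)) + Q (Q (b u v))"
  let ?NR = "b (R x) (R y) - R (b (R x) y) - R (b x (R y)) + R (R (b x y))"
  have "?NR + ?NR = - ?NP x y - Q (?NP x (Q y)) - Q (?NP (Q x) y) + ?NP (Q x) (Q y)
      + ?NQ x y - P (?NQ x (P y)) - P (?NQ (P x) y) + ?NQ (P x) (P y)"
    by (simp add: rules algebra_simps)
  also have "\<dots> = 0" by (simp add: NP NQ x y QG PG P0 Q0)
  finally show ?thesis by (rule two)
qed
lemma alg_case2:
  fixes G :: "'a::ab_group_add set" and b :: "'a \<Rightarrow> 'a \<Rightarrow> 'a" and P Q R :: "'a \<Rightarrow> 'a"
  assumes G0: "0 \<in> G" and Gd: "\<And>u v. u \<in> G \<Longrightarrow> v \<in> G \<Longrightarrow> u - v \<in> G"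
    and bG: "\<And>u v. u \<in> G \<Longrightarrow> v \<in> G \<Longrightarrow> b u v \<in> G"
    and bl: "\<And>u v w. u \<in> G \<Longrightarrow> v \<in> G \<Longrightarrow> w \<in> G \<Longrightarrow> b (u - v) w = b u w - b v w"
    and br: "\<And>u v w. u \<in> G \<Longrightarrow> v \<in> G \<Longrightarrow> w \<in> G \<Longrightarrow> b w (u - v) = b w u - b w v"
    and PG: "\<And>u. u \<in> G \<Longrightarrow> P u \<in> G" and QG: "\<And>u. u \<in> G \<Longrightarrow> Q u \<in> G" and RG: "\<And>u. u \<in> G \<Longrightarrow> R u \<in> G"
    and Pl: "\<And>u v. u \<in> G \<Longrightarrow> v \<in> G \<Longrightarrow> P (u - v) = P u - P v"
    and Ql: "\<And>u v. u \<in> G \<Longrightarrow> v \<in> G \<Longrightarrow> Q (u - v) = Q u - Q v"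
    and Rl: "\<And>u v. u \<in> G \<Longrightarrow> v \<in> G \<Longrightarrow> R (u - v) = R u - R v"
    and PP: "\<And>u. u \<in> G \<Longrightarrow> P (P u) = u" and QQ: "\<And>u. u \<in> G \<Longrightarrow> Q (Q u) = u"
    and RR: "\<And>u. u \<in> G \<Longrightarrow> R (R u) = - u"
    and PQ: "\<And>u. u \<in> G \<Longrightarrow> P (Q u) = R u" and QP: "\<And>u. u \<in> G \<Longrightarrow> Q (P u) = - R u"
    and PR: "\<And>u. u \<in> G \<Longrightarrow> P (R u) = Q u" and RP: "\<And>u. u \<in> G \<Longrightarrow> R (P u) = - Q u"
    and QR: "\<And>u. u \<in> G \<Longrightarrow> Q (R u) = - P u" and RQ: "\<And>u. u \<in> G \<Longrightarrow> R (Q u) = P u"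
    and two: "\<And>u::'a. u + u = 0 \<Longrightarrow> u = 0"
    and NP: "\<And>u v. u \<in> G \<Longrightarrow> v \<in> G \<Longrightarrow> b (P u) (P v) - P (b (P u) v) - P (b u (P v)) + P (P (b u v)) = 0"
    and NQ: "\<And>u v. u \<in> G \<Longrightarrow> v \<in> G \<Longrightarrow> b (Q u) (Q v) - Q (b (Q u) v) - Q (b u (Q v)) + Q (Q (b u v)) = 0"
    and x: "x \<in> G" and y: "y \<in> G"
  shows "b (R x) (R y) - R (b (R x) y) - R (b x (R y)) + R (R (b x y)) = 0"
proof -
  have Gn: "\<And>u. u \<in> G \<Longrightarrow> - u \<in> G" using Gd[OF G0] by simp
  have Ga: "\<And>u v. u \<in> G \<Longrightarrow> v \<in> G \<Longrightarrow> u + v \<in> G" using Gd Gn by (metis diff_minus_eq_add)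
  have b0l: "\<And>w. w \<in> G \<Longrightarrow> b 0 w = 0" using bl[OF G0 G0] by simp
  have b0r: "\<And>w. w \<in> G \<Longrightarrow> b w 0 = 0" using br[OF G0 G0] by simp
  have bnl: "\<And>u w. u \<in> G \<Longrightarrow> w \<in> G \<Longrightarrow> b (- u) w = - b u w" using bl[OF G0] b0l by (metis diff_0)
  have bnr: "\<And>u w. u \<in> G \<Longrightarrow> w \<in> G \<Longrightarrow> b w (- u) = - b w u" using br[OF G0] b0r by (metis diff_0)
  have bal: "\<And>u v w. u \<in> G \<Longrightarrow> v \<in> G \<Longrightarrow> w \<in> G \<Longrightarrow> b (u + v) w = b u w + b v w"
    using bl bnl Gn by (metis diff_minus_eq_add)
  have bar: "\<And>u v w. u \<in> G \<Longrightarrow> v \<in> G \<Longrightarrow> w \<in> G \<Longrightarrow> b w (u + v) = b w u + b w v"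
    using br bnr Gn by (metis diff_minus_eq_add)
  have P0: "P 0 = 0" using Pl[OF G0 G0] by simp
  have Q0: "Q 0 = 0" using Ql[OF G0 G0] by simp
  have R0: "R 0 = 0" using Rl[OF G0 G0] by simp
  have Pn: "\<And>u. u \<in> G \<Longrightarrow> P (- u) = - P u" using Pl[OF G0] P0 by (metis diff_0)
  have Qn: "\<And>u. u \<in> G \<Longrightarrow> Q (- u) = - Q u" using Ql[OF G0] Q0 by (metis diff_0)
  have Rn: "\<And>u. u \<in> G \<Longrightarrow> R (- u) = - R u" using Rl[OF G0] R0 by (metis diff_0)
  have Pa: "\<And>u v. u \<in> G \<Longrightarrow> v \<in> G \<Longrightarrow> P (u + v) = P u + P v" using Pl Pn Gn by (metis diff_minus_eq_add)
  have Qa: "\<And>u v. u \<in> G \<Longrightarrow> v \<in> G \<Longrightarrow> Q (u + v) = Q u + Q v" using Ql Qn Gn by (metis diff_minus_eq_add)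
  have Ra: "\<And>u v. u \<in> G \<Longrightarrow> v \<in> G \<Longrightarrow> R (u + v) = R u + R v" using Rl Rn Gn by (metis diff_minus_eq_add)
  note rules = Gn Ga Gd bG PG QG RG bl br bnl bnr bal bar Pl Ql Rl Pn Qn Rn Pa Qa Ra PP QQ RR PQ QP PR RP QR RQ x y
  let ?NP = "\<lambda>u v. b (P u) (P v) - P (b (P u) v) - P (b u (P v)) + P (P (b u v))"
  let ?NQ = "\<lambda>u v. b (Q u) (Q v) - Q (b (Q u) v) - Q (b u (Q v)) + Q (Q (b u v))"
  let ?NR = "b (R x) (R y) - R (b (R x) y) - R (b x (R y)) + R (R (b x y))"
  have "?NR + ?NR = - ?NP x y - Q (?NP x (Q y)) - Q (?NP (Q x) y) + ?NP (Q x) (Q y)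
      - ?NQ x y - P (?NQ x (P y)) - P (?NQ (P x) y) + ?NQ (P x) (P y)"
    by (simp add: rules algebra_simps)
  also have "\<dots> = 0" by (simp add: NP NQ x y QG PG P0 Q0)
  finally show ?thesis by (rule two)
qed
lemma Ck_cong:
  fixes f g :: "'a::euclidean_space \<Rightarrow> real"
  assumes "open U" "\<And>x. x \<in> U \<Longrightarrow> f x = g x" "Ck k U f"
  shows "Ck k U g"
  using assms(2,3)
proof (induction k arbitrary: f g)
  case 0
  then show ?case using continuous_on_cong by (metis Ck.simps(1))
next
  case (Suc k)
  have hd: "(g has_derivative frechet_derivative f (at x)) (at x)" if "x \<in> U" for x
  proof -
    have "f differentiable at x" using Suc.prems(2) that by simp
    then have "(f has_derivative frechet_derivative f (at x)) (at x)" by (simp add: frechet_derivative_works)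
    then show ?thesis by (rule has_derivative_transform_within_open[OF _ assms(1) that Suc.prems(1)])
  qed
  have eq: "frechet_derivative g (at x) = frechet_derivative f (at x)" if "x \<in> U" for x
    using frechet_derivative_at[OF hd[OF that]] by simp
  show ?case
    using Suc.prems(2) hd eq Suc.IH[of "\<lambda>x. frechet_derivative f (at x) v" "\<lambda>x. frechet_derivative g (at x) v" for v]
    by (auto simp: differentiable_def)
qed

lemma Ck_const: "Ck k U (\<lambda>x. c::real)"
proof (induction k arbitrary: c)
  case 0 then show ?case by simp
next
  case (Suc k)
  have "frechet_derivative (\<lambda>x. c) (at x) = (\<lambda>v. 0)" for x
    using frechet_derivative_at[OF has_derivative_const] by metis
  then show ?case using Suc by simp
qed

lemma Ck_lin:
  fixes f g :: "'a::euclidean_space \<Rightarrow> real"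
  assumes "open U"
  shows "Ck k U f \<Longrightarrow> Ck k U g \<Longrightarrow> Ck k U (\<lambda>x. a * f x + b * g x)"
proof (induction k arbitrary: f g)
  case 0
  then show ?case by (auto intro!: continuous_intros)
next
  case (Suc k)
  have hd: "((\<lambda>x. a * f x + b * g x) has_derivative
       (\<lambda>v. a * frechet_derivative f (at x) v + b * frechet_derivative g (at x) v)) (at x)" if "x \<in> U" for x
    using Suc.prems that
    by (auto intro!: derivative_eq_intros frechet_derivative_works[THEN iffD1])
  have eq: "frechet_derivative (\<lambda>x. a * f x + b * g x) (at x) v =
      a * frechet_derivative f (at x) v + b * frechet_derivative g (at x) v" if "x \<in> U" for x v
    using frechet_derivative_at[OF hd[OF that]] by metis
  show ?case
  proof (simp only: Ck.simps, intro conjI ballI allI)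
    fix x assume "x \<in> U" then show "(\<lambda>x. a * f x + b * g x) differentiable at x"
      using hd differentiable_def by blast
  next
    fix v
    show "Ck k U (\<lambda>x. frechet_derivative (\<lambda>x. a * f x + b * g x) (at x) v)"
      apply (rule Ck_cong[OF assms, of "\<lambda>x. a * frechet_derivative f (at x) v + b * frechet_derivative g (at x) v"])
      using eq Suc by auto
  qed
qed

lemma Ck_mono: "Ck (Suc k) U f \<Longrightarrow> Ck k U (f :: 'a::euclidean_space \<Rightarrow> real)"
proof (induction k arbitrary: f)
  case 0
  then show ?case
    by (auto intro!: continuous_at_imp_continuous_on differentiable_imp_continuous_within)
next
  case (Suc k)
  then show ?case by (simp only: Ck.simps) blast
qed

lemma Ck_mult:
  fixes f g :: "'a::euclidean_space \<Rightarrow> real"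
  assumes "open U"
  shows "Ck k U f \<Longrightarrow> Ck k U g \<Longrightarrow> Ck k U (\<lambda>x. f x * g x)"
proof (induction k arbitrary: f g)
  case 0
  then show ?case by (auto intro!: continuous_intros)
next
  case (Suc k)
  have hd: "((\<lambda>x. f x * g x) has_derivative
       (\<lambda>v. f x * frechet_derivative g (at x) v + frechet_derivative f (at x) v * g x)) (at x)" if "x \<in> U" for x
    using Suc.prems that
    by (auto intro!: derivative_eq_intros frechet_derivative_works[THEN iffD1])
  have eq: "frechet_derivative (\<lambda>x. f x * g x) (at x) v =
      f x * frechet_derivative g (at x) v + frechet_derivative f (at x) v * g x" if "x \<in> U" for x v
    using frechet_derivative_at[OF hd[OF that]] by metis
  show ?case
  proof (simp only: Ck.simps, intro conjI ballI allI)
    fix x assume "x \<in> U" then show "(\<lambda>x. f x * g x) differentiable at x"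
      using hd differentiable_def by blast
  next
    fix v
    have f: "Ck k U f" "Ck k U g" using Ck_mono Suc.prems by blast+
    have d: "Ck k U (\<lambda>x. frechet_derivative f (at x) v)" "Ck k U (\<lambda>x. frechet_derivative g (at x) v)"
      using Suc.prems by auto
    have "Ck k U (\<lambda>x. 1 * (f x * frechet_derivative g (at x) v) + 1 * (frechet_derivative f (at x) v * g x))"
      by (rule Ck_lin[OF assms]; rule Suc.IH; fact)
    then show "Ck k U (\<lambda>x. frechet_derivative (\<lambda>x. f x * g x) (at x) v)"
      by (rule Ck_cong[OF assms, rotated]) (use eq in auto)
  qed
qed

definition good :: "'m fn set \<Rightarrow> 'm fn \<Rightarrow> bool" where
  "good S one \<longleftrightarrow> (\<lambda>x. 0) \<in> S \<and> one \<in> S \<and>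
     (\<forall>f\<in>S. \<forall>g\<in>S. \<forall>a b. (\<lambda>x. a * f x + b * g x) \<in> S) \<and>
     (\<forall>f\<in>S. \<forall>g\<in>S. (\<lambda>x. f x * g x) \<in> S) \<and> (\<forall>f\<in>S. \<forall>x. one x * f x = f x)"

context
  fixes S :: "'m fn set" and one :: "'m fn"
  assumes gd: "good S one"
begin

lemma S0: "(\<lambda>x. 0) \<in> S" and S1: "one \<in> S"
  and Slin: "f \<in> S \<Longrightarrow> g \<in> S \<Longrightarrow> (\<lambda>x. a * f x + b * g x) \<in> S"
  and Smult: "f \<in> S \<Longrightarrow> g \<in> S \<Longrightarrow> (\<lambda>x. f x * g x) \<in> S"
  and Sone: "f \<in> S \<Longrightarrow> one x * f x = f x"
  using gd unfolding good_def by auto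

lemma Sadd: "f \<in> S \<Longrightarrow> g \<in> S \<Longrightarrow> (\<lambda>x. f x + g x) \<in> S"
  using Slin[of f g 1 1] by simp
lemma Sdiff: "f \<in> S \<Longrightarrow> g \<in> S \<Longrightarrow> (\<lambda>x. f x - g x) \<in> S"
  using Slin[of f g 1 "-1"] by simp
lemma Sneg1: "(\<lambda>x. - one x) \<in> S"
  using Slin[OF S0 S1, of 0 "-1"] by simp

lemma vfD:
  assumes "vector_field S X"
  shows vfS: "\<And>f. f \<in> S \<Longrightarrow> X f \<in> S"
    and vfN: "\<And>f. f \<notin> S \<Longrightarrow> X f = (\<lambda>_. 0)"
    and vfL: "\<And>f g a b. f \<in> S \<Longrightarrow> g \<in> S \<Longrightarrow> X (\<lambda>x. a * f x + b * g x) = (\<lambda>x. a * X f x + b * X g x)"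
    and vfM: "\<And>f g. f \<in> S \<Longrightarrow> g \<in> S \<Longrightarrow> X (\<lambda>x. f x * g x) = (\<lambda>x. f x * X g x + g x * X f x)"
  using assms unfolding vector_field_def by auto

lemma vfA: "vector_field S X \<Longrightarrow> f \<in> S \<Longrightarrow> g \<in> S \<Longrightarrow> X (\<lambda>x. f x + g x) = (\<lambda>x. X f x + X g x)"
  using vfL[of X f g 1 1] by simp
lemma vfDf: "vector_field S X \<Longrightarrow> f \<in> S \<Longrightarrow> g \<in> S \<Longrightarrow> X (\<lambda>x. f x - g x) = (\<lambda>x. X f x - X g x)"
  using vfL[of X f g 1 "-1"] by simp
lemma vf_one: "vector_field S X \<Longrightarrow> one x * X g x = X g x"
  by (cases "g \<in> S") (auto simp: vfS Sone vfN)

lemma vf_zero: "vector_field S (\<lambda>g x. 0)"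
  unfolding vector_field_def by (auto simp: S0)

lemma vf_diff:
  assumes X: "vector_field S X" and Y: "vector_field S Y"
  shows "vector_field S (\<lambda>g x. X g x - Y g x)"
  unfolding vector_field_def
  using X Y by (auto simp: vfS vfN vfL vfM Sdiff algebra_simps)

lemma vf_smul_vf:
  assumes f: "f \<in> S" and X: "vector_field S X"
  shows "vector_field S (vf_smul f X)"
  unfolding vector_field_def vf_smul_def
  using X f by (auto simp: vfS vfN vfL vfM Smult algebra_simps)

lemma vf_add_vf:
  assumes X: "vector_field S X" and Y: "vector_field S Y"
  shows "vector_field S (vf_add X Y)"
  unfolding vector_field_def vf_add_def
  using X Y by (auto simp: vfS vfN vfL vfM Sadd algebra_simps)

lemma lie_vf:
  assumes X: "vector_field S X" and Y: "vector_field S Y"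
  shows "vector_field S (lie S X Y)"
proof -
  have XS: "\<And>f. f \<in> S \<Longrightarrow> X f \<in> S" and YS: "\<And>f. f \<in> S \<Longrightarrow> Y f \<in> S" using X Y vfS by auto
  note XL = vfL[OF X] and YL = vfL[OF Y] and XM = vfM[OF X] and YM = vfM[OF Y]
  note XA = vfA[OF X] and YA = vfA[OF Y]
  show ?thesis
    unfolding vector_field_def lie_def
    by (auto simp: XS YS Sdiff Slin Smult XL YL XM YM XA YA algebra_simps)
qed

lemma ofD:
  assumes "one_form S \<eta>"
  shows ofS: "\<And>X. vector_field S X \<Longrightarrow> \<eta> X \<in> S"
    and ofN: "\<And>X. \<not> vector_field S X \<Longrightarrow> \<eta> X = (\<lambda>_. 0)"
    and ofT: "\<And>f X Y. f \<in> S \<Longrightarrow> vector_field S X \<Longrightarrow> vector_field S Y \<Longrightarrow>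
        \<eta> (vf_add (vf_smul f X) Y) = (\<lambda>x. f x * \<eta> X x + \<eta> Y x)"
  using assms unfolding one_form_def by auto

lemma of_one: "one_form S \<eta> \<Longrightarrow> one x * \<eta> X x = \<eta> X x"
  by (cases "vector_field S X") (auto simp: ofS Sone ofN)

lemma vf_add_smul_one: "vector_field S U \<Longrightarrow> vf_add (vf_smul one U) V = vf_add U V"
  unfolding vf_add_def vf_smul_def by (simp add: vf_one)

lemma of_add: assumes e: "one_form S \<eta>" and U: "vector_field S U" and V: "vector_field S V"
  shows "\<eta> (vf_add U V) = (\<lambda>x. \<eta> U x + \<eta> V x)"
  using ofT[OF e S1 U V] vf_add_smul_one[OF U] of_one[OF e] by simp

lemma of_zero_vf: assumes e: "one_form S \<eta>" shows "\<eta> (\<lambda>g x. 0) = (\<lambda>x. 0)"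
proof -
  have "\<eta> (\<lambda>g x. 0) = \<eta> (vf_add (\<lambda>g x. 0) (\<lambda>g x. 0))" by (simp add: vf_add_def)
  also have "\<dots> = (\<lambda>x. \<eta> (\<lambda>g x. 0) x + \<eta> (\<lambda>g x. 0) x)"
    by (rule of_add[OF e vf_zero vf_zero])
  finally have eq: "\<eta> (\<lambda>g x. 0) = (\<lambda>x. \<eta> (\<lambda>g x. 0) x + \<eta> (\<lambda>g x. 0) x)" .
  show ?thesis
  proof (rule ext)
    fix x show "\<eta> (\<lambda>g x. 0) x = 0" using fun_cong[OF eq, of x] by simp
  qed
qed

lemma of_smul: assumes e: "one_form S \<eta>" and f: "f \<in> S" and U: "vector_field S U"
  shows "\<eta> (vf_smul f U) = (\<lambda>x. f x * \<eta> U x)"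
proof -
  have "vf_add (vf_smul f U) (\<lambda>g x. 0) = vf_smul f U" by (simp add: vf_add_def)
  then show ?thesis using ofT[OF e f U vf_zero] of_zero_vf[OF e] by simp
qed

lemma vf_minus_eq: "vector_field S V \<Longrightarrow> vf_add (vf_smul (\<lambda>x. - one x) V) U = (\<lambda>g x. U g x - V g x)"
  unfolding vf_add_def vf_smul_def by (rule ext, rule ext) (simp add: vf_one)

lemma of_diff: assumes e: "one_form S \<eta>" and U: "vector_field S U" and V: "vector_field S V"
  shows "\<eta> (\<lambda>g x. U g x - V g x) = (\<lambda>x. \<eta> U x - \<eta> V x)"
  using ofT[OF e Sneg1 V U] vf_minus_eq[OF V, of U] of_one[OF e] by simp

lemma of_zero: "one_form S (\<lambda>Y x. 0)"
  unfolding one_form_def using S0 by auto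

lemma of_diffform: assumes e: "one_form S \<eta>" and b: "one_form S \<beta>"
  shows "one_form S (\<lambda>Y x. \<eta> Y x - \<beta> Y x)"
  unfolding one_form_def using e b by (auto simp: ofS ofN ofT Sdiff algebra_simps)

lemma connD:
  assumes "affine_connection S nabla"
  shows cvf: "\<And>X Y. vector_field S X \<Longrightarrow> vector_field S Y \<Longrightarrow> vector_field S (nabla X Y)"
    and c1: "\<And>f X Y Z. f\<in>S \<Longrightarrow> vector_field S X \<Longrightarrow> vector_field S Y \<Longrightarrow> vector_field S Z \<Longrightarrow>
        nabla (vf_add (vf_smul f X) Y) Z = vf_add (vf_smul f (nabla X Z)) (nabla Y Z)"
    and c2: "\<And>X Y Z. vector_field S X \<Longrightarrow> vector_field S Y \<Longrightarrow> vector_field S Z \<Longrightarrow>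
        nabla X (vf_add Y Z) = vf_add (nabla X Y) (nabla X Z)"
    and c3: "\<And>f X Y. f\<in>S \<Longrightarrow> vector_field S X \<Longrightarrow> vector_field S Y \<Longrightarrow>
        nabla X (vf_smul f Y) = vf_add (vf_smul (X f) Y) (vf_smul f (nabla X Y))"
  using assms unfolding affine_connection_def by auto

lemma conn_diff:
  assumes c: "affine_connection S nabla" and X1: "vector_field S X1" and X2: "vector_field S X2"
    and Z: "vector_field S Z"
  shows "nabla (\<lambda>g x. X1 g x - X2 g x) Z = (\<lambda>g x. nabla X1 Z g x - nabla X2 Z g x)"
  using c1[OF c Sneg1 X2 X1 Z] vf_minus_eq[OF X2, of X1] vf_minus_eq[OF cvf[OF c X2 Z], of "nabla X1 Z"]
  by simp

lemma nabla_form_of: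
  assumes c: "affine_connection S nabla" and X: "vector_field S X" and b: "one_form S \<beta>"
  shows "one_form S (nabla_form S nabla X \<beta>)"
proof -
  have t: "nabla_form S nabla X \<beta> (vf_add (vf_smul f Y) Z) =
      (\<lambda>x. f x * nabla_form S nabla X \<beta> Y x + nabla_form S nabla X \<beta> Z x)"
    if f: "f \<in> S" and Y: "vector_field S Y" and Z: "vector_field S Z" for f Y Z
  proof -
    have fY: "vector_field S (vf_smul f Y)" by (rule vf_smul_vf[OF f Y])
    have W: "vector_field S (vf_add (vf_smul f Y) Z)" by (rule vf_add_vf[OF fY Z])
    have Xf: "X f \<in> S" by (rule vfS[OF X f])
    have bW: "\<beta> (vf_add (vf_smul f Y) Z) = (\<lambda>x. f x * \<beta> Y x + \<beta> Z x)" by (rule ofT[OF b f Y Z])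
    have XbW: "X (\<lambda>x. f x * \<beta> Y x + \<beta> Z x) = (\<lambda>x. f x * X (\<beta> Y) x + \<beta> Y x * X f x + X (\<beta> Z) x)"
      using vfA[OF X Smult[OF f ofS[OF b Y]] ofS[OF b Z]] vfM[OF X f ofS[OF b Y]] by simp
    have nW: "nabla X (vf_add (vf_smul f Y) Z) = vf_add (vf_add (vf_smul (X f) Y) (vf_smul f (nabla X Y))) (nabla X Z)"
      using c2[OF c X fY Z] c3[OF c f X Y] by simp
    have v1: "vector_field S (vf_smul (X f) Y)" by (rule vf_smul_vf[OF Xf Y])
    have v2: "vector_field S (vf_smul f (nabla X Y))" by (rule vf_smul_vf[OF f cvf[OF c X Y]])
    have bnW: "\<beta> (nabla X (vf_add (vf_smul f Y) Z)) =
        (\<lambda>x. X f x * \<beta> Y x + f x * \<beta> (nabla X Y) x + \<beta> (nabla X Z) x)"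
      unfolding nW
      using of_add[OF b vf_add_vf[OF v1 v2] cvf[OF c X Z]] of_add[OF b v1 v2]
        of_smul[OF b Xf Y] of_smul[OF b f cvf[OF c X Y]] by simp
    show ?thesis
      unfolding nabla_form_def using W Y Z bW XbW bnW
      by (simp add: algebra_simps)
  qed
  show ?thesis
    unfolding one_form_def
  proof (intro conjI allI impI ballI)
    fix Y assume Y: "vector_field S Y"
    show "nabla_form S nabla X \<beta> Y \<in> S"
      unfolding nabla_form_def using Y
      by (simp add: Sdiff vfS[OF X] ofS[OF b] cvf[OF c X Y])
  next
    fix Y assume "\<not> vector_field S Y"
    then show "nabla_form S nabla X \<beta> Y = (\<lambda>_. 0)" unfolding nabla_form_def by simp
  qed (rule t)
qed

lemma lie_diff_l:
  assumes X1: "vector_field S X1" and X2: "vector_field S X2" and Y: "vector_field S Y"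
  shows "lie S (\<lambda>g x. X1 g x - X2 g x) Y = (\<lambda>g x. lie S X1 Y g x - lie S X2 Y g x)"
  unfolding lie_def using vfDf[OF Y vfS[OF X1] vfS[OF X2]] by (auto simp: fun_eq_iff)

lemma lie_diff_r:
  assumes X: "vector_field S X" and Y1: "vector_field S Y1" and Y2: "vector_field S Y2"
  shows "lie S X (\<lambda>g x. Y1 g x - Y2 g x) = (\<lambda>g x. lie S X Y1 g x - lie S X Y2 g x)"
  unfolding lie_def using vfDf[OF X vfS[OF Y1] vfS[OF Y2]] by (auto simp: fun_eq_iff)

lemma nf_diff_X:
  assumes c: "affine_connection S nabla" and X1: "vector_field S X1" and X2: "vector_field S X2"
    and b: "one_form S \<beta>"
  shows "nabla_form S nabla (\<lambda>g x. X1 g x - X2 g x) \<beta> =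
     (\<lambda>Z x. nabla_form S nabla X1 \<beta> Z x - nabla_form S nabla X2 \<beta> Z x)"
proof (rule ext)+
  fix Z x
  show "nabla_form S nabla (\<lambda>g x. X1 g x - X2 g x) \<beta> Z x =
     nabla_form S nabla X1 \<beta> Z x - nabla_form S nabla X2 \<beta> Z x"
  proof (cases "vector_field S Z")
    case True
    then show ?thesis unfolding nabla_form_def
      using conn_diff[OF c X1 X2 True] of_diff[OF b cvf[OF c X1 True] cvf[OF c X2 True]]
      by simp
  qed (simp add: nabla_form_def)
qed

lemma nf_diff_b:
  assumes X: "vector_field S X" and b1: "one_form S \<beta>1" and b2: "one_form S \<beta>2"
  shows "nabla_form S nabla X (\<lambda>Y x. \<beta>1 Y x - \<beta>2 Y x) =
     (\<lambda>Z x. nabla_form S nabla X \<beta>1 Z x - nabla_form S nabla X \<beta>2 Z x)"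
proof (rule ext)+
  fix Z x
  show "nabla_form S nabla X (\<lambda>Y x. \<beta>1 Y x - \<beta>2 Y x) Z x =
     nabla_form S nabla X \<beta>1 Z x - nabla_form S nabla X \<beta>2 Z x"
  proof (cases "vector_field S Z")
    case True
    then show ?thesis unfolding nabla_form_def
      using vfDf[OF X ofS[OF b1 True] ofS[OF b2 True]]
      by simp
  qed (simp add: nabla_form_def)
qed

lemma sec_diff_eq: "(\<sigma>::'m gsec) - \<tau> = (\<lambda>g x. fst \<sigma> g x - fst \<tau> g x, \<lambda>Y x. snd \<sigma> Y x - snd \<tau> Y x)"
  by (simp add: prod_eq_iff fun_eq_iff)

lemma G0: "(0::'m gsec) \<in> gsections S"
  using vf_zero of_zero by (simp add: gsections_def zero_prod_def fun_eq_iff zero_fun_def)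

lemma Gdiff: "\<sigma> \<in> gsections S \<Longrightarrow> \<tau> \<in> gsections S \<Longrightarrow> \<sigma> - \<tau> \<in> gsections S"
  unfolding sec_diff_eq gsections_def using vf_diff of_diffform by auto

lemma brG:
  assumes c: "affine_connection S nabla"
  shows "\<sigma> \<in> gsections S \<Longrightarrow> \<tau> \<in> gsections S \<Longrightarrow> nabla_bracket S nabla \<sigma> \<tau> \<in> gsections S"
  unfolding gsections_def nabla_bracket_def
  by (auto intro!: lie_vf of_diffform nabla_form_of[OF c])

lemma br_l:
  assumes c: "affine_connection S nabla"
  shows "u \<in> gsections S \<Longrightarrow> v \<in> gsections S \<Longrightarrow> w \<in> gsections S \<Longrightarrow>
    nabla_bracket S nabla (u - v) w = nabla_bracket S nabla u w - nabla_bracket S nabla v w"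
  unfolding gsections_def nabla_bracket_def sec_diff_eq
  by (auto simp: lie_diff_l nf_diff_X[OF c] nf_diff_b fun_eq_iff)

lemma br_r:
  assumes c: "affine_connection S nabla"
  shows "u \<in> gsections S \<Longrightarrow> v \<in> gsections S \<Longrightarrow> w \<in> gsections S \<Longrightarrow>
    nabla_bracket S nabla w (u - v) = nabla_bracket S nabla w u - nabla_bracket S nabla w v"
  unfolding gsections_def nabla_bracket_def sec_diff_eq
  by (auto simp: lie_diff_r nf_diff_X[OF c] nf_diff_b fun_eq_iff)

lemma vf_neg: "vector_field S X \<Longrightarrow> - one x * X g x = - X g x"
  using vf_one[of X x g] by simp
lemma of_neg: "one_form S \<eta> \<Longrightarrow> - one x * \<eta> X x = - \<eta> X x"
  using of_one[of \<eta> x X] by simp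

lemma sec_minus_eq: "\<tau> \<in> gsections S \<Longrightarrow> sec_add (sec_smul (\<lambda>x. - one x) \<tau>) \<sigma> = \<sigma> - \<tau>"
proof -
  assume t: "\<tau> \<in> gsections S"
  obtain X \<eta> where tt: "\<tau> = (X, \<eta>)" "vector_field S X" "one_form S \<eta>"
    using t unfolding gsections_def by auto
  show ?thesis unfolding tt(1) sec_add_def sec_smul_def sec_diff_eq
    by (simp add: fun_eq_iff vf_one[OF tt(2)] of_one[OF tt(3)])
qed

lemma endo_G: "bundle_endo S K \<Longrightarrow> \<sigma> \<in> gsections S \<Longrightarrow> K \<sigma> \<in> gsections S"
  unfolding bundle_endo_def by auto

lemma endo_diff:
  assumes K: "bundle_endo S K" and s: "\<sigma> \<in> gsections S" and t: "\<tau> \<in> gsections S"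
  shows "K (\<sigma> - \<tau>) = K \<sigma> - K \<tau>"
proof -
  have "K (sec_add (sec_smul (\<lambda>x. - one x) \<tau>) \<sigma>) = sec_add (sec_smul (\<lambda>x. - one x) (K \<tau>)) (K \<sigma>)"
    using K Sneg1 s t unfolding bundle_endo_def by blast
  then show ?thesis using sec_minus_eq[OF t] sec_minus_eq[OF endo_G[OF K t]] by simp
qed

lemma nij_eq:
  "nabla_nijenhuis S nabla K \<sigma> \<tau> =
     nabla_bracket S nabla (K \<sigma>) (K \<tau>) - K (nabla_bracket S nabla (K \<sigma>) \<tau>)
     - K (nabla_bracket S nabla \<sigma> (K \<tau>)) + K (K (nabla_bracket S nabla \<sigma> \<tau>))"
  unfolding nabla_nijenhuis_def sec_add_def sec_diff_def by (simp add: prod_eq_iff fun_eq_iff)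

lemma sec_zero_eq: "sec_zero = 0" by (simp add: sec_zero_def prod_eq_iff fun_eq_iff)

lemma two_gsec:
  assumes u: "(u::'m gsec) + u = 0" shows "u = 0"
proof -
  have a: "fst u + fst u = 0" "snd u + snd u = 0" using u by (metis fst_add fst_zero, metis snd_add snd_zero)
  have "fst u g x = 0" for g x using fun_cong[OF fun_cong[OF a(1), of g], of x] by simp
  moreover have "snd u g x = 0" for g x using fun_cong[OF fun_cong[OF a(2), of g], of x] by simp
  ultimately show ?thesis by (simp add: prod_eq_iff fun_eq_iff)
qed

end
lemma good_smooth:
  assumes M: "smooth_manifold T A"
  shows "good (smooth_functions T A) (\<lambda>x. if x \<in> topspace T then 1 else 0)"
proof -
  have ch: "open (\<phi> ` U) \<and> U \<subseteq> topspace T" if "(\<phi>, U) \<in> A" for \<phi> U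
  proof -
    have "openin T U \<and> open (\<phi> ` U)" using M that unfolding smooth_manifold_def by fastforce
    then show ?thesis using openin_subset by blast
  qed
  let ?one = "\<lambda>x. if x \<in> topspace T then 1 else (0::real)"
  have z: "(\<lambda>x. 0::real) \<in> smooth_functions T A"
    unfolding smooth_functions_def smooth_on_def by (auto simp: o_def Ck_const)
  have o: "?one \<in> smooth_functions T A"
    unfolding smooth_functions_def smooth_on_def
  proof (clarsimp)
    fix \<phi> U k assume a: "(\<phi>, U) \<in> A"
    show "Ck k (\<phi> ` U) (?one \<circ> inv_into U \<phi>)"
      apply (rule Ck_cong[OF conjunct1[OF ch[OF a]] _ Ck_const[of k _ 1]])
      using ch[OF a] by (auto simp: inv_into_into)
  qed
  have l: "(\<lambda>x. a * f x + b * g x) \<in> smooth_functions T A"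
    if "f \<in> smooth_functions T A" "g \<in> smooth_functions T A" for f g a b
    using that unfolding smooth_functions_def smooth_on_def
  proof (clarsimp)
    fix \<phi> U k assume a: "(\<phi>, U) \<in> A"
      and f: "\<forall>x\<in>A. case x of (\<phi>, U) \<Rightarrow> \<forall>k. Ck k (\<phi> ` U) (f \<circ> inv_into U \<phi>)"
      and g: "\<forall>x\<in>A. case x of (\<phi>, U) \<Rightarrow> \<forall>k. Ck k (\<phi> ` U) (g \<circ> inv_into U \<phi>)"
    have "Ck k (\<phi> ` U) (\<lambda>y. a * (f \<circ> inv_into U \<phi>) y + b * (g \<circ> inv_into U \<phi>) y)"
    proof -
      have f': "Ck k (\<phi> ` U) (f \<circ> inv_into U \<phi>)" and g': "Ck k (\<phi> ` U) (g \<circ> inv_into U \<phi>)"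
        using f g a by fastforce+
      show ?thesis using Ck_lin[OF conjunct1[OF ch[OF a]] f' g'] by simp
    qed
    then show "Ck k (\<phi> ` U) ((\<lambda>x. a * f x + b * g x) \<circ> inv_into U \<phi>)" by (simp add: o_def)
  qed
  have m: "(\<lambda>x. f x * g x) \<in> smooth_functions T A"
    if "f \<in> smooth_functions T A" "g \<in> smooth_functions T A" for f g
    using that unfolding smooth_functions_def smooth_on_def
  proof (clarsimp)
    fix \<phi> U k assume a: "(\<phi>, U) \<in> A"
      and f: "\<forall>x\<in>A. case x of (\<phi>, U) \<Rightarrow> \<forall>k. Ck k (\<phi> ` U) (f \<circ> inv_into U \<phi>)"
      and g: "\<forall>x\<in>A. case x of (\<phi>, U) \<Rightarrow> \<forall>k. Ck k (\<phi> ` U) (g \<circ> inv_into U \<phi>)"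
    have "Ck k (\<phi> ` U) (\<lambda>y. (f \<circ> inv_into U \<phi>) y * (g \<circ> inv_into U \<phi>) y)"
    proof -
      have f': "Ck k (\<phi> ` U) (f \<circ> inv_into U \<phi>)" and g': "Ck k (\<phi> ` U) (g \<circ> inv_into U \<phi>)"
        using f g a by fastforce+
      show ?thesis using Ck_mult[OF conjunct1[OF ch[OF a]] f' g'] by simp
    qed
    then show "Ck k (\<phi> ` U) ((\<lambda>x. f x * g x) \<circ> inv_into U \<phi>)" by (simp add: o_def)
  qed
  have on: "?one x * f x = f x" if "f \<in> smooth_functions T A" for f x
    using that unfolding smooth_functions_def by auto
  show ?thesis unfolding good_def using z o l m on by blast
qed

lemma main_aux:
  fixes S :: "'m fn set"
  assumes gd: "good S one" and c: "affine_connection S nabla"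
    and pq: "gen_almost_paraquaternionic S J1 J2 J3"
  shows "(nabla_integrable S nabla J1 \<and> nabla_integrable S nabla J2 \<longrightarrow> nabla_integrable S nabla J3)
       \<and> (nabla_integrable S nabla J2 \<and> nabla_integrable S nabla J3 \<longrightarrow> nabla_integrable S nabla J1)"
proof -
  let ?G = "gsections S" and ?b = "nabla_bracket S nabla"
  have K1: "bundle_endo S J1" and K2: "bundle_endo S J2" and K3: "bundle_endo S J3"
    using pq unfolding gen_almost_paraquaternionic_def by auto
  have negeq: "sec_neg u = - u" for u :: "'m gsec" by (simp add: sec_neg_def prod_eq_iff fun_eq_iff)
  have r11: "J1 (J1 u) = - u" and r22: "J2 (J2 u) = u" and r33: "J3 (J3 u) = u"
    and r12: "J1 (J2 u) = - J2 (J1 u)" and r3: "J3 u = J1 (J2 u)" if "u \<in> ?G" for u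
    using pq that unfolding gen_almost_paraquaternionic_def negeq by auto
  have G0: "0 \<in> ?G" by (rule G0[OF gd])
  have Gd: "\<And>u v. u \<in> ?G \<Longrightarrow> v \<in> ?G \<Longrightarrow> u - v \<in> ?G" by (rule Gdiff[OF gd])
  have bG: "\<And>u v. u \<in> ?G \<Longrightarrow> v \<in> ?G \<Longrightarrow> ?b u v \<in> ?G" by (rule brG[OF gd c])
  have bl: "\<And>u v w. u \<in> ?G \<Longrightarrow> v \<in> ?G \<Longrightarrow> w \<in> ?G \<Longrightarrow> ?b (u - v) w = ?b u w - ?b v w"
    by (rule br_l[OF gd c])
  have br: "\<And>u v w. u \<in> ?G \<Longrightarrow> v \<in> ?G \<Longrightarrow> w \<in> ?G \<Longrightarrow> ?b w (u - v) = ?b w u - ?b w v"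
    by (rule br_r[OF gd c])
  have KG: "\<And>K u. bundle_endo S K \<Longrightarrow> u \<in> ?G \<Longrightarrow> K u \<in> ?G" by (rule endo_G[OF gd])
  have Kd: "\<And>K u v. bundle_endo S K \<Longrightarrow> u \<in> ?G \<Longrightarrow> v \<in> ?G \<Longrightarrow> K (u - v) = K u - K v"
    by (rule endo_diff[OF gd])
  have Kn: "K (- u) = - K u" if K: "bundle_endo S K" and u: "u \<in> ?G" for K u
  proof -
    have "K 0 = 0" using Kd[OF K G0 G0] by simp
    then show ?thesis using Kd[OF K G0 u] by simp
  qed
  have two: "\<And>u::'m gsec. u + u = 0 \<Longrightarrow> u = 0" by (rule two_gsec[OF gd])
  have int_iff: "nabla_integrable S nabla K \<longleftrightarrow> (\<forall>u\<in>?G. \<forall>v\<in>?G.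
      ?b (K u) (K v) - K (?b (K u) v) - K (?b u (K v)) + K (K (?b u v)) = 0)" for K
    unfolding nabla_integrable_def nij_eq[OF gd] sec_zero_eq[OF gd] by simp
  have G1: "u \<in> ?G \<Longrightarrow> J1 u \<in> ?G" and G2: "u \<in> ?G \<Longrightarrow> J2 u \<in> ?G" and G3: "u \<in> ?G \<Longrightarrow> J3 u \<in> ?G" for u
    using KG K1 K2 K3 by auto
  have PQ: "J1 (J2 u) = J3 u" if "u \<in> ?G" for u using r3 that by simp
  have QP: "J2 (J1 u) = - J3 u" if "u \<in> ?G" for u using r3 r12 that by simp
  have PR: "J1 (J3 u) = - J2 u" if "u \<in> ?G" for u using r3 r11 G2 that by simp
  have RP: "J3 (J1 u) = J2 u" if u: "u \<in> ?G" for u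
  proof -
    have "J3 (J1 u) = J1 (J2 (J1 u))" using r3 G1 u by simp
    also have "\<dots> = J1 (- J3 u)" using QP u by simp
    also have "\<dots> = - J1 (J3 u)" using Kn[OF K1 G3[OF u]] .
    finally show ?thesis using PR u by simp
  qed
  have QR: "J2 (J3 u) = - J1 u" if u: "u \<in> ?G" for u
  proof -
    have "J2 (J3 u) = J2 (J1 (J2 u))" using r3 u by simp
    also have "\<dots> = - J3 (J2 u)" using QP G2 u by simp
    also have "\<dots> = - J1 u" using r3 G2 r22 u by simp
    finally show ?thesis .
  qed
  have RQ: "J3 (J2 u) = J1 u" if "u \<in> ?G" for u using r3 G2 r22 that by simp
  show ?thesis
  proof (intro conjI impI)
    assume "nabla_integrable S nabla J1 \<and> nabla_integrable S nabla J2"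
    then have N1: "\<And>u v. u \<in> ?G \<Longrightarrow> v \<in> ?G \<Longrightarrow> ?b (J1 u) (J1 v) - J1 (?b (J1 u) v) - J1 (?b u (J1 v)) + J1 (J1 (?b u v)) = 0"
      and N2: "\<And>u v. u \<in> ?G \<Longrightarrow> v \<in> ?G \<Longrightarrow> ?b (J2 u) (J2 v) - J2 (?b (J2 u) v) - J2 (?b u (J2 v)) + J2 (J2 (?b u v)) = 0"
      unfolding int_iff by auto
    show "nabla_integrable S nabla J3" unfolding int_iff
      using alg_case1[where G = ?G and b = ?b and P = J1 and Q = J2 and R = J3, OF G0 Gd bG bl br G1 G2 G3
          Kd[OF K1] Kd[OF K2] Kd[OF K3] r11 r22 r33 PQ QP PR RP QR RQ two N1 N2] by blast
  next
    assume "nabla_integrable S nabla J2 \<and> nabla_integrable S nabla J3"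
    then have N2: "\<And>u v. u \<in> ?G \<Longrightarrow> v \<in> ?G \<Longrightarrow> ?b (J2 u) (J2 v) - J2 (?b (J2 u) v) - J2 (?b u (J2 v)) + J2 (J2 (?b u v)) = 0"
      and N3: "\<And>u v. u \<in> ?G \<Longrightarrow> v \<in> ?G \<Longrightarrow> ?b (J3 u) (J3 v) - J3 (?b (J3 u) v) - J3 (?b u (J3 v)) + J3 (J3 (?b u v)) = 0"
      unfolding int_iff by auto
    show "nabla_integrable S nabla J1" unfolding int_iff
      using alg_case2[where G = ?G and b = ?b and P = J3 and Q = J2 and R = J1, OF G0 Gd bG bl br G3 G2 G1
          Kd[OF K3] Kd[OF K2] Kd[OF K1] r33 r22 r11 RQ QR RP PR QP PQ two N3 N2] by blast
  qed
qed

theorem proposition2p12: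
  fixes T :: "'m topology"
    and A :: "(('m \<Rightarrow> 'e::euclidean_space) \<times> 'm set) set"
    and nabla :: "'m vfield \<Rightarrow> 'm vfield \<Rightarrow> 'm vfield"
    and J1 J2 J3 :: "'m gsec \<Rightarrow> 'm gsec"
  assumes "smooth_manifold T A"
    and "affine_connection (smooth_functions T A) nabla"
    and "gen_almost_paraquaternionic (smooth_functions T A) J1 J2 J3"
  shows "(nabla_integrable (smooth_functions T A) nabla J1 \<and> nabla_integrable (smooth_functions T A) nabla J2
            \<longrightarrow> nabla_integrable (smooth_functions T A) nabla J3)
       \<and> (nabla_integrable (smooth_functions T A) nabla J2 \<and> nabla_integrable (smooth_functions T A) nabla J3
            \<longrightarrow> nabla_integrable (smooth_functions T A) nabla J1)"
  by (rule main_aux[OF good_smooth[OF assms(1)] assms(2) assms(3)])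

end
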